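(* If a partial coloring of an $n\times n$ square $A$ uniquely extends to $L(n,2n-2)$, then there are no rows $i_1\neq i_2$ and columns $j_1\neq j_2$ such that all four entries $(i_1,j_1),(i_1,j_2),(i_2,j_1),(i_2,j_2)$ are uncolored.
   Context: For positive integers $n,k$, let $\mathcal{L}_{n,k}$ be the set of $n\times n$ squares all of whose entries are colored with colors from a fixed set of $k$ colors $\{1,\dots,k\}$ such that any two entries in the same row, or in the same column, have different colors. Entries are indexed $(i,j)$, $i$ the row and $j$ the column. A partial coloring of an $n\times n$ square assigns colors from $\{1,\dots,k\}$ to some of its entries; the remaining entries are called uncolored. A partial coloring extends to $L(n,k)$ if the uncolored entries can be colored so that the resulting fully colored square lies in $\mathcal{L}_{n,k}$ (keeping the given colors), and it uniquely extends to $L(n,k)$ if there is exactly one such way. *)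

theory Defs
  imports Main
begin

text \<open>A full coloring is a function nat => nat => nat; it is normalized to be 0
  outside the n x n square so that distinct colorings of the square are
  distinct functions.\<close>

definition in_L :: "nat \<Rightarrow> nat \<Rightarrow> (nat \<Rightarrow> nat \<Rightarrow> nat) \<Rightarrow> bool" where
  "in_L n k L \<longleftrightarrow>
     (\<forall>i j. (i < n \<and> j < n) \<longrightarrow> L i j \<in> {1..k}) \<and>
     (\<forall>i j. \<not> (i < n \<and> j < n) \<longrightarrow> L i j = 0) \<and>
     (\<forall>i j j'. i < n \<and> j < n \<and> j' < n \<and> j \<noteq> j' \<longrightarrow> L i j \<noteq> L i j') \<and>
     (\<forall>i i' j. i < n \<and> i' < n \<and> j < n \<and> i \<noteq> i' \<longrightarrow> L i j \<noteq> L i' j)"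

definition partial_coloring :: "nat \<Rightarrow> nat \<Rightarrow> (nat \<Rightarrow> nat \<Rightarrow> nat option) \<Rightarrow> bool" where
  "partial_coloring n k A \<longleftrightarrow>
     (\<forall>i j c. A i j = Some c \<longrightarrow> i < n \<and> j < n \<and> c \<in> {1..k})"

definition extends_to :: "nat \<Rightarrow> nat \<Rightarrow> (nat \<Rightarrow> nat \<Rightarrow> nat option) \<Rightarrow> (nat \<Rightarrow> nat \<Rightarrow> nat) \<Rightarrow> bool" where
  "extends_to n k A L \<longleftrightarrow> in_L n k L \<and> (\<forall>i j c. A i j = Some c \<longrightarrow> L i j = c)"

definition uniquely_extends :: "nat \<Rightarrow> nat \<Rightarrow> (nat \<Rightarrow> nat \<Rightarrow> nat option) \<Rightarrow> bool" where
  "uniquely_extends n k A \<longleftrightarrow> (\<exists>!L. extends_to n k A L)"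

end

theory Submission
  imports Defs
begin

lemma c4:
  fixes a b c d a' b' c' d' :: nat
  assumes "a\<noteq>b" "a\<noteq>c" "b\<noteq>d" "c\<noteq>d" "a'\<noteq>a" "b'\<noteq>b" "c'\<noteq>c" "d'\<noteq>d"
  shows "\<exists>x y z w. x\<in>{a,a'} \<and> y\<in>{b,b'} \<and> z\<in>{c,c'} \<and> w\<in>{d,d'} \<and> x\<noteq>y \<and> x\<noteq>z \<and> y\<noteq>w \<and> z\<noteq>w
     \<and> \<not>(x=a \<and> y=b \<and> z=c \<and> w=d)"
  using assms by (smt (verit) insertI1 insertI2 singletonI)

lemma avail:
  assumes L: "in_L n (2*n-2) L" and "p<n" "q<n" "j1\<noteq>j2" "i1\<noteq>i2" "j1<n" "j2<n" "i1<n" "i2<n"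
  shows "\<exists>x\<in>{1..2*n-2}. x \<noteq> L p q \<and> (\<forall>j<n. j\<noteq>j1 \<and> j\<noteq>j2 \<longrightarrow> L p j \<noteq> x)
           \<and> (\<forall>i<n. i\<noteq>i1 \<and> i\<noteq>i2 \<longrightarrow> L i q \<noteq> x)"
proof -
  define F where "F = (\<lambda>j. L p j) ` ({..<n}-{j1,j2}) \<union> (\<lambda>i. L i q) ` ({..<n}-{i1,i2}) \<union> {L p q}"
  have c1: "card ({..<n}-{j1,j2}) = n - 2"
    using assms by (subst card_Diff_subset) auto
  have c2: "card ({..<n}-{i1,i2}) = n - 2"
    using assms by (subst card_Diff_subset) auto
  have "card F \<le> card ((\<lambda>j. L p j) ` ({..<n}-{j1,j2})) + card ((\<lambda>i. L i q) ` ({..<n}-{i1,i2})) + card {L p q}"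
    unfolding F_def by (meson card_Un_le add_le_mono order_trans le_refl)
  also have "\<dots> \<le> (n-2) + (n-2) + 1"
    using card_image_le[of "{..<n}-{j1,j2}" "\<lambda>j. L p j"] card_image_le[of "{..<n}-{i1,i2}" "\<lambda>i. L i q"] c1 c2
    by simp
  finally have "card F < card {1..2*n-2}" using assms by auto
  then have "\<not> {1..2*n-2} \<subseteq> F"
    by (metis F_def card_mono finite.emptyI finite.insertI finite_Diff finite_Un finite_imageI finite_lessThan not_le)
  then obtain x where "x \<in> {1..2*n-2}" "x \<notin> F" by blast
  then show ?thesis unfolding F_def by auto
qed

lemma gen:
  fixes g :: "nat \<Rightarrow> nat"
  assumes "\<forall>j j'. j<n \<and> j'<n \<and> j\<noteq>j' \<longrightarrow> g j \<noteq> g j'" "j1 \<noteq> j2" "u \<noteq> v"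
  shows "(\<forall>j<n. j\<noteq>j1 \<and> j\<noteq>j2 \<longrightarrow> g j \<noteq> u) \<Longrightarrow> (\<forall>j<n. j\<noteq>j1 \<and> j\<noteq>j2 \<longrightarrow> g j \<noteq> v)
    \<Longrightarrow> \<forall>j j'. j<n \<and> j'<n \<and> j\<noteq>j' \<longrightarrow> (if j=j1 then u else if j=j2 then v else g j) \<noteq> (if j'=j1 then u else if j'=j2 then v else g j')"
  using assms by (metis (no_types, lifting))

theorem lemma2:
  fixes n :: nat and A :: "nat \<Rightarrow> nat \<Rightarrow> nat option"
  assumes "partial_coloring n (2 * n - 2) A"
    and "uniquely_extends n (2 * n - 2) A"
  shows "\<not> (\<exists>i1 i2 j1 j2. i1 < n \<and> i2 < n \<and> j1 < n \<and> j2 < n \<and> i1 \<noteq> i2 \<and> j1 \<noteq> j2 \<and>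
            A i1 j1 = None \<and> A i1 j2 = None \<and> A i2 j1 = None \<and> A i2 j2 = None)"
proof
  assume "\<exists>i1 i2 j1 j2. i1 < n \<and> i2 < n \<and> j1 < n \<and> j2 < n \<and> i1 \<noteq> i2 \<and> j1 \<noteq> j2 \<and>
            A i1 j1 = None \<and> A i1 j2 = None \<and> A i2 j1 = None \<and> A i2 j2 = None"
  then obtain i1 i2 j1 j2 where h: "i1 < n" "i2 < n" "j1 < n" "j2 < n" "i1 \<noteq> i2" "j1 \<noteq> j2"
    "A i1 j1 = None" "A i1 j2 = None" "A i2 j1 = None" "A i2 j2 = None" by blast
  let ?k = "2*n-2"
  obtain L where LE: "extends_to n ?k A L" and uq: "\<And>L'. extends_to n ?k A L' \<Longrightarrow> L' = L"
    using assms(2) unfolding uniquely_extends_def by blast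
  have L: "in_L n ?k L" using LE extends_to_def by blast
  note Ld = L[unfolded in_L_def]
  obtain a' where a': "a'\<in>{1..?k}" "a' \<noteq> L i1 j1" "\<forall>j<n. j\<noteq>j1 \<and> j\<noteq>j2 \<longrightarrow> L i1 j \<noteq> a'"
     "\<forall>i<n. i\<noteq>i1 \<and> i\<noteq>i2 \<longrightarrow> L i j1 \<noteq> a'" using avail[OF L, of i1 j1 j1 j2 i1 i2] h by blast
  obtain b' where b': "b'\<in>{1..?k}" "b' \<noteq> L i1 j2" "\<forall>j<n. j\<noteq>j1 \<and> j\<noteq>j2 \<longrightarrow> L i1 j \<noteq> b'"
     "\<forall>i<n. i\<noteq>i1 \<and> i\<noteq>i2 \<longrightarrow> L i j2 \<noteq> b'" using avail[OF L, of i1 j2 j1 j2 i1 i2] h by blast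
  obtain c' where c': "c'\<in>{1..?k}" "c' \<noteq> L i2 j1" "\<forall>j<n. j\<noteq>j1 \<and> j\<noteq>j2 \<longrightarrow> L i2 j \<noteq> c'"
     "\<forall>i<n. i\<noteq>i1 \<and> i\<noteq>i2 \<longrightarrow> L i j1 \<noteq> c'" using avail[OF L, of i2 j1 j1 j2 i1 i2] h by blast
  obtain d' where d': "d'\<in>{1..?k}" "d' \<noteq> L i2 j2" "\<forall>j<n. j\<noteq>j1 \<and> j\<noteq>j2 \<longrightarrow> L i2 j \<noteq> d'"
     "\<forall>i<n. i\<noteq>i1 \<and> i\<noteq>i2 \<longrightarrow> L i j2 \<noteq> d'" using avail[OF L, of i2 j2 j1 j2 i1 i2] h by blast
  have "L i1 j1 \<noteq> L i1 j2" "L i1 j1 \<noteq> L i2 j1" "L i1 j2 \<noteq> L i2 j2" "L i2 j1 \<noteq> L i2 j2"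
    using Ld h by blast+
  then obtain x y z w where xyzw: "x\<in>{L i1 j1,a'}" "y\<in>{L i1 j2,b'}" "z\<in>{L i2 j1,c'}" "w\<in>{L i2 j2,d'}"
    "x\<noteq>y" "x\<noteq>z" "y\<noteq>w" "z\<noteq>w" "\<not>(x=L i1 j1 \<and> y=L i1 j2 \<and> z=L i2 j1 \<and> w=L i2 j2)"
    using c4[of "L i1 j1" "L i1 j2" "L i2 j1" "L i2 j2" a' b' c' d'] a' b' c' d' by blast
  define L' where "L' = (\<lambda>i j. if i = i1 \<and> j = j1 then x else if i = i1 \<and> j = j2 then y
     else if i = i2 \<and> j = j1 then z else if i = i2 \<and> j = j2 then w else L i j)"
  have xr: "x \<in> {1..?k}" "\<forall>j<n. j\<noteq>j1 \<and> j\<noteq>j2 \<longrightarrow> L i1 j \<noteq> x" "\<forall>i<n. i\<noteq>i1 \<and> i\<noteq>i2 \<longrightarrow> L i j1 \<noteq> x"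
    using xyzw(1) a' Ld h by auto
  have yr: "y \<in> {1..?k}" "\<forall>j<n. j\<noteq>j1 \<and> j\<noteq>j2 \<longrightarrow> L i1 j \<noteq> y" "\<forall>i<n. i\<noteq>i1 \<and> i\<noteq>i2 \<longrightarrow> L i j2 \<noteq> y"
    using xyzw(2) b' Ld h by auto
  have zr: "z \<in> {1..?k}" "\<forall>j<n. j\<noteq>j1 \<and> j\<noteq>j2 \<longrightarrow> L i2 j \<noteq> z" "\<forall>i<n. i\<noteq>i1 \<and> i\<noteq>i2 \<longrightarrow> L i j1 \<noteq> z"
    using xyzw(3) c' Ld h by auto
  have wr: "w \<in> {1..?k}" "\<forall>j<n. j\<noteq>j1 \<and> j\<noteq>j2 \<longrightarrow> L i2 j \<noteq> w" "\<forall>i<n. i\<noteq>i1 \<and> i\<noteq>i2 \<longrightarrow> L i j2 \<noteq> w"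
    using xyzw(4) d' Ld h by auto
  have sym: "\<forall>j<n. j\<noteq>j1 \<and> j\<noteq>j2 \<longrightarrow> x \<noteq> L i1 j \<and> y \<noteq> L i1 j \<and> z \<noteq> L i2 j \<and> w \<noteq> L i2 j"
    "\<forall>i<n. i\<noteq>i1 \<and> i\<noteq>i2 \<longrightarrow> x \<noteq> L i j1 \<and> y \<noteq> L i j2 \<and> z \<noteq> L i j1 \<and> w \<noteq> L i j2"
    using xr yr zr wr by metis+
  have R1: "L' i1 = (\<lambda>j. if j=j1 then x else if j=j2 then y else L i1 j)"
    and R2: "L' i2 = (\<lambda>j. if j=j1 then z else if j=j2 then w else L i2 j)"
    and C1: "\<And>i. L' i j1 = (if i=i1 then x else if i=i2 then z else L i j1)"
    and C2: "\<And>i. L' i j2 = (if i=i1 then y else if i=i2 then w else L i j2)"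
    using h unfolding L'_def by (auto intro!: ext)
  have R0: "\<And>i. i \<noteq> i1 \<Longrightarrow> i \<noteq> i2 \<Longrightarrow> L' i = L i"
    and C0: "\<And>j. j \<noteq> j1 \<Longrightarrow> j \<noteq> j2 \<Longrightarrow> (\<lambda>i. L' i j) = (\<lambda>i. L i j)"
    unfolding L'_def by (auto intro!: ext)
  have rowL: "\<And>i. i < n \<Longrightarrow> \<forall>j j'. j<n \<and> j'<n \<and> j\<noteq>j' \<longrightarrow> L i j \<noteq> L i j'"
    using Ld by blast
  have colL: "\<And>j. j < n \<Longrightarrow> \<forall>i i'. i<n \<and> i'<n \<and> i\<noteq>i' \<longrightarrow> L i j \<noteq> L i' j"
    using Ld by blast
  have rowok: "\<forall>j j'. j<n \<and> j'<n \<and> j\<noteq>j' \<longrightarrow> L' i j \<noteq> L' i j'" if "i < n" for i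
  proof (cases "i = i1 \<or> i = i2")
    case True
    then show ?thesis
    proof
      assume "i = i1" then show ?thesis
        by (simp only: R1) (rule gen[OF rowL[OF h(1)] h(6) xyzw(5) xr(2) yr(2)])
    next
      assume "i = i2" then show ?thesis
        by (simp only: R2) (rule gen[OF rowL[OF h(2)] h(6) xyzw(8) zr(2) wr(2)])
    qed
  next
    case False then show ?thesis using R0 rowL[OF that] by simp
  qed
  have colok: "\<forall>i i'. i<n \<and> i'<n \<and> i\<noteq>i' \<longrightarrow> L' i j \<noteq> L' i' j" if "j < n" for j
  proof (cases "j = j1 \<or> j = j2")
    case True
    then show ?thesis
    proof
      assume "j = j1" then show ?thesis
        by (simp only: C1) (rule gen[OF colL[OF h(3)] h(5) xyzw(6) xr(3) zr(3)])
    next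
      assume "j = j2" then show ?thesis
        by (simp only: C2) (rule gen[OF colL[OF h(4)] h(5) xyzw(7) yr(3) wr(3)])
    qed
  next
    case False
    then have "\<And>i. L' i j = L i j" using C0 by metis
    then show ?thesis using colL[OF that] by simp
  qed
  have "in_L n ?k L'"
    unfolding in_L_def
  proof (intro conjI allI impI)
    fix i j assume "i < n \<and> j < n" then show "L' i j \<in> {1..?k}"
      using xr yr zr wr Ld unfolding L'_def by auto
  next
    fix i j assume "\<not> (i < n \<and> j < n)" then show "L' i j = 0"
      using h Ld unfolding L'_def by auto
  next
    fix i j j' assume a: "i < n \<and> j < n \<and> j' < n \<and> j \<noteq> j'"
    then show "L' i j \<noteq> L' i j'" using rowok by blast
  next
    fix i i' j assume a: "i < n \<and> i' < n \<and> j < n \<and> i \<noteq> i'"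
    then show "L' i j \<noteq> L' i' j" using colok by blast
  qed
  moreover have "\<forall>i j c. A i j = Some c \<longrightarrow> L' i j = c"
    using LE h unfolding extends_to_def L'_def by auto
  ultimately have "L' = L" using uq extends_to_def by blast
  moreover have "L' \<noteq> L"
  proof
    assume "L' = L"
    then have "L' i1 j1 = L i1 j1" "L' i1 j2 = L i1 j2" "L' i2 j1 = L i2 j1" "L' i2 j2 = L i2 j2" by auto
    then show False using xyzw(9) h unfolding L'_def by auto
  qed
  ultimately show False by blast
qed

end
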